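(* Let $k \geqslant 2$, and let $\pi_1, \ldots, \pi_k \geqslant 3$ be pairwise relatively prime integers, where $\pi_1=3$. Then the minimal DFA that recognizes the same language as the NFA $A_{\pi_1, \ldots, \pi_k}$ has at least $\prod_{i=1}^k (2^{\pi_i}-2)$ states.
   Context: The NFA $A_{\pi_1,\ldots,\pi_k}=(\{a,b\},Q,\{\widehat q\},\delta,\{\widehat q\})$ has states $Q=\{\widehat{q}\} \cup \bigcup_{i=1}^k \{q_{i,0}, \ldots, q_{i,\pi_i-1}\} \cup \bigcup_{i=1}^k \{r_{i,1}, \ldots, r_{i,\pi_i-2}\}$, unique initial state $\widehat q$, unique accepting state $\widehat q$, and exactly the following transitions: $\delta(\widehat{q}, a) = \{q_{1,0}, \ldots, q_{k,0}\}$; $\delta(q_{i,j},a) = \{q_{i,(j+1) \bmod \pi_i}\}$ for all $i$ and $0\leqslant j\leqslant \pi_i-1$; $\delta(q_{i,j},b) = \{r_{i,j}\}$ and $\delta(r_{i,j},a)=\{q_{i,j+1}\}$ for $1 \leqslant j \leqslant \pi_i-2$; $\delta(q_{i,0},b) = \{\widehat{q}\}$; all other transitions are empty. The language of an NFA is the set of strings on which some computation from an initial state ends in an accepting state. *)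

theory Defs
  imports Main
begin

datatype sym = SymA | SymB

datatype nstate = Qhat | Qst nat nat | Rst nat nat

fun nfa_step :: "(nat \<Rightarrow> nat) \<Rightarrow> nat \<Rightarrow> nstate \<Rightarrow> sym \<Rightarrow> nstate set" where
  "nfa_step p k Qhat SymA = {Qst i 0 | i. 1 \<le> i \<and> i \<le> k}"
| "nfa_step p k Qhat SymB = {}"
| "nfa_step p k (Qst i j) SymA =
     (if 1 \<le> i \<and> i \<le> k \<and> j < p i then {Qst i (Suc j mod p i)} else {})"
| "nfa_step p k (Qst i j) SymB =
     (if 1 \<le> i \<and> i \<le> k \<and> j = 0 then {Qhat}
      else if 1 \<le> i \<and> i \<le> k \<and> 1 \<le> j \<and> j \<le> p i - 2 then {Rst i j}
      else {})"
| "nfa_step p k (Rst i j) SymA =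
     (if 1 \<le> i \<and> i \<le> k \<and> 1 \<le> j \<and> j \<le> p i - 2 then {Qst i (Suc j)} else {})"
| "nfa_step p k (Rst i j) SymB = {}"

fun nfa_run :: "(nat \<Rightarrow> nat) \<Rightarrow> nat \<Rightarrow> nstate set \<Rightarrow> sym list \<Rightarrow> nstate set" where
  "nfa_run p k S [] = S"
| "nfa_run p k S (x # w) = nfa_run p k (\<Union>q\<in>S. nfa_step p k q x) w"

definition nfa_lang :: "(nat \<Rightarrow> nat) \<Rightarrow> nat \<Rightarrow> sym list set" where
  "nfa_lang p k = {w. Qhat \<in> nfa_run p k {Qhat} w}"

definition dfa_run :: "('q \<Rightarrow> sym \<Rightarrow> 'q) \<Rightarrow> 'q \<Rightarrow> sym list \<Rightarrow> 'q" where
  "dfa_run \<delta> q w = foldl \<delta> q w"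

definition dfa_recognizes :: "'q set \<Rightarrow> 'q \<Rightarrow> ('q \<Rightarrow> sym \<Rightarrow> 'q) \<Rightarrow> 'q set \<Rightarrow> sym list set \<Rightarrow> bool" where
  "dfa_recognizes Q q0 \<delta> F L \<longleftrightarrow>
     finite Q \<and> q0 \<in> Q \<and> (\<forall>q\<in>Q. \<forall>x. \<delta> q x \<in> Q) \<and> F \<subseteq> Q \<and>
     (\<forall>w. w \<in> L \<longleftrightarrow> dfa_run \<delta> q0 w \<in> F)"

end

theory Submission imports Defs "HOL-Number_Theory.Cong" "HOL-Library.FuncSet"
begin

lemma run_append: "nfa_run p k S (u @ v) = nfa_run p k (nfa_run p k S u) v"
  by (induction u arbitrary: S) auto

definition qset :: "nat \<Rightarrow> (nat \<Rightarrow> nat set) \<Rightarrow> nstate set" where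
  "qset k S = {Qst i j | i j. 1 \<le> i \<and> i \<le> k \<and> j \<in> S i}"

definition rch :: "(nat \<Rightarrow> nat) \<Rightarrow> nat \<Rightarrow> nstate set \<Rightarrow> bool" where
  "rch p k X \<longleftrightarrow> (\<exists>w. nfa_run p k {Qhat} w = X)"

lemma rch_step: "rch p k X \<Longrightarrow> rch p k (nfa_run p k X v)"
  unfolding rch_def by (metis run_append)

lemma qset_cong: "(\<And>i. 1 \<le> i \<Longrightarrow> i \<le> k \<Longrightarrow> S i = T i) \<Longrightarrow> qset k S = qset k T"
  unfolding qset_def by force

definition valid :: "(nat \<Rightarrow> nat) \<Rightarrow> nat \<Rightarrow> (nat \<Rightarrow> nat set) \<Rightarrow> bool" where
  "valid p k S \<longleftrightarrow> (\<forall>i. 1 \<le> i \<longrightarrow> i \<le> k \<longrightarrow> S i \<subseteq> {..<p i})"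


lemma arith_rot: "(x::nat) < p \<Longrightarrow> y < p \<Longrightarrow> (x + (p - y)) mod p = (if y \<le> x then x - y else x + p - y)"
proof (cases "y \<le> x")
  case True
  assume "x < p" "y < p"
  then have "x + (p - y) = (x - y) + p" using True by arith
  then have "(x + (p - y)) mod p = (x - y + p) mod p" by (simp only:)
  also have "\<dots> = x - y" using \<open>x < p\<close> by simp
  finally show ?thesis using True by simp
next
  case False
  assume "x < p" "y < p"
  then show ?thesis using False by simp
qed

lemma modh: "((x::nat) + a mod p + 1 + b mod p) mod p = (x + a + 1 + b) mod p"
proof -
  have h1: "(x + a mod p + 1 + b mod p) mod p = ((x + a mod p + 1) + b) mod p" by (rule mod_add_right_eq)
  have h2: "((x + a mod p + 1) + b) mod p = ((a mod p) + (x + 1 + b)) mod p" by (simp add: ac_simps)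
  have h3: "((a mod p) + (x + 1 + b)) mod p = (a + (x + 1 + b)) mod p" by (rule mod_add_left_eq)
  show ?thesis using h1 h2 h3 by (simp add: ac_simps)
qed

lemma core_arith:
  fixes p y m1 m2 :: nat and S :: "nat set"
  assumes p: "p \<ge> 3" and S: "S \<subseteq> {..<p}" and y: "y < p"
    and m1: "m1 mod p = (p - y) mod p" and m2: "m2 mod p = (y + p - 1) mod p"
  shows "(\<lambda>j. (j + m2) mod p) ` ({0} \<union> Suc ` ((\<lambda>j. (j + m1) mod p) ` S \<inter> {1..p - 2}))
         = (S - {y}) \<union> {(y + p - 1) mod p}"
proof -
  have e0: "(0 + m2) mod p = (y + p - 1) mod p" using m2 by simp
  have e1: "(Suc ((x + m1) mod p) + m2) mod p = x" if "x < p" for x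
  proof -
    have "(Suc ((x + m1) mod p) + m2) mod p = ((x + m1) mod p + Suc m2) mod p" by simp
    also have "\<dots> = (x + m1 + Suc m2) mod p" by (rule mod_add_left_eq)
    also have "\<dots> = (x + m1 mod p + 1 + m2 mod p) mod p"
      using modh[of x m1 p m2] by simp
    also have "\<dots> = (x + (p - y) mod p + 1 + (y + p - 1) mod p) mod p" using m1 m2 by simp
    also have "\<dots> = (x + (p - y) + 1 + (y + p - 1)) mod p" by (rule modh)
    also have "x + (p - y) + 1 + (y + p - 1) = x + p * 2" using y p by simp
    also have "(x + p * 2) mod p = x" using that by simp
    finally show ?thesis .
  qed
  have e2: "(x + m1) mod p = (if y \<le> x then x - y else x + p - y)" if "x < p" for x
  proof -
    have "(x + m1) mod p = (x + m1 mod p) mod p" by (simp add: mod_simps)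
    also have "\<dots> = (x + (p - y)) mod p" using m1 by (simp add: mod_simps)
    finally show ?thesis using arith_rot[OF that y] by simp
  qed
  have e3: "(y + p - 1) mod p = (if y = 0 then p - 1 else y - 1)"
  proof (cases "y = 0")
    case True then show ?thesis using p by simp
  next
    case False
    then have "y + p - 1 = (y - 1) + p" by simp
    then have "(y + p - 1) mod p = ((y - 1) + p) mod p" by (simp only:)
    also have "\<dots> = y - 1" using y by simp
    finally show ?thesis using False by simp
  qed
  show ?thesis
  proof (rule set_eqI, rule iffI)
    fix z assume "z \<in> (\<lambda>j. (j + m2) mod p) ` ({0} \<union> Suc ` ((\<lambda>j. (j + m1) mod p) ` S \<inter> {1..p - 2}))"
    then consider "z = (0 + m2) mod p"
      | x where "x \<in> S" "(x + m1) mod p \<in> {1..p - 2}" "z = (Suc ((x + m1) mod p) + m2) mod p"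
      by auto
    then show "z \<in> (S - {y}) \<union> {(y + p - 1) mod p}"
    proof cases
      case 1 then show ?thesis using e0 by simp
    next
      case (2 x)
      have xp: "x < p" using 2 S by auto
      have "x \<noteq> y" using 2(2) e2[OF xp] by auto
      then show ?thesis using 2 e1[OF xp] by simp
    qed
  next
    fix z assume z: "z \<in> (S - {y}) \<union> {(y + p - 1) mod p}"
    show "z \<in> (\<lambda>j. (j + m2) mod p) ` ({0} \<union> Suc ` ((\<lambda>j. (j + m1) mod p) ` S \<inter> {1..p - 2}))"
    proof (cases "z = (y + p - 1) mod p")
      case True
      then show ?thesis using e0 by (intro rev_image_eqI[of 0]) auto
    next
      case False
      then have zS: "z \<in> S" "z \<noteq> y" using z by auto
      have zp: "z < p" using zS S by auto
      have "(z + m1) mod p \<in> {1..p - 2}" using e2[OF zp] e3 False zS(2) zp y p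
        by (auto split: if_splits)
      then show ?thesis using e1[OF zp] zS
        by (intro rev_image_eqI[of "Suc ((z + m1) mod p)"]) auto
    qed
  qed
qed


definition gd :: "nat set \<Rightarrow> nat \<Rightarrow> bool" where
  "gd A n \<longleftrightarrow> A \<subseteq> {..<n} \<and> A \<noteq> {} \<and> A \<noteq> {..<n}"

lemma ex_edge: assumes "gd A n" shows "\<exists>x\<in>A. Suc x mod n \<notin> A"
proof (rule ccontr)
  assume "\<not> ?thesis"
  then have cl: "\<And>x. x \<in> A \<Longrightarrow> Suc x mod n \<in> A" by auto
  obtain t where t: "t \<in> A" using assms unfolding gd_def by auto
  have n0: "n > 0" using assms t unfolding gd_def by auto
  have all: "(t + m) mod n \<in> A" for m
  proof (induction m)
    case 0
    have "t < n" using t assms unfolding gd_def by auto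
    then show ?case using t by simp
  next
    case (Suc m)
    then have "Suc ((t + m) mod n) mod n \<in> A" by (rule cl)
    then show ?case by (simp add: mod_Suc_eq)
  qed
  have "{..<n} \<subseteq> A"
  proof
    fix j assume j: "j \<in> {..<n}"
    have "t < n" using t assms unfolding gd_def by auto
    then have "t + (j + n - t) = j + n" by simp
    then have "(t + (j + n - t)) mod n = j" using j by simp
    then show "j \<in> A" using all[of "j + n - t"] by simp
  qed
  then show False using assms unfolding gd_def by auto
qed

lemma sucmod_back: "(x::nat) < n \<Longrightarrow> (Suc x mod n + n - 1) mod n = x"
proof (cases "Suc x = n")
  case True
  assume "x < n" then show ?thesis using True by simp
next
  case False
  assume "x < n"
  then have "Suc x < n" using False by simp
  then have "Suc x mod n + n - 1 = x + n" by simp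
  then have "(Suc x mod n + n - 1) mod n = (x + n) mod n" by (simp only:)
  then show ?thesis using \<open>x < n\<close> by simp
qed

lemma id_choice: assumes "gd A n" shows "\<exists>y<n. y \<notin> A \<and> (y + n - 1) mod n \<in> A"
proof -
  obtain x where x: "x \<in> A" "Suc x mod n \<notin> A" using ex_edge[OF assms] by blast
  have xn: "x < n" using x assms unfolding gd_def by auto
  show ?thesis
    by (rule exI[of _ "Suc x mod n"]) (use x xn sucmod_back[OF xn] in auto)
qed

lemma helper_choice: assumes "gd A n" shows "\<exists>y<n. y \<in> A \<and> (y + n - 1) mod n \<notin> A"
proof -
  have "gd ({..<n} - A) n" using assms unfolding gd_def by auto
  from ex_edge[OF this] obtain x where x: "x < n" "x \<notin> A" "Suc x mod n \<in> A" by auto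
  show ?thesis
    by (rule exI[of _ "Suc x mod n"]) (use x sucmod_back[OF x(1)] in auto)
qed

definition s3 :: "bool \<Rightarrow> bool \<Rightarrow> bool \<Rightarrow> nat set" where
  "s3 a b c = (if a then {0} else {}) \<union> (if b then {1} else {}) \<union> (if c then {2} else {})"

lemma s3_rot: "card (s3 a0 a1 a2) = card (s3 b0 b1 b2) \<Longrightarrow>
  s3 b0 b1 b2 = (\<lambda>j. (j + 0) mod 3) ` s3 a0 a1 a2 \<or> s3 b0 b1 b2 = (\<lambda>j. (j + 1) mod 3) ` s3 a0 a1 a2 \<or> s3 b0 b1 b2 = (\<lambda>j. (j + 2) mod 3) ` s3 a0 a1 a2"
  unfolding s3_def
  by (cases a0; cases a1; cases a2; cases b0; cases b1; cases b2; simp add: insert_commute numeral_2_eq_2)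

lemma z3_rot: fixes A B :: "nat set" assumes "A \<subseteq> {..<3}" "B \<subseteq> {..<3}" "card A = card B"
  shows "\<exists>c. B = (\<lambda>j. (j + c) mod 3) ` A"
proof -
  have dec: "X = s3 (0 \<in> X) (1 \<in> X) (2 \<in> X)"
    if "X \<subseteq> {..<3::nat}" for X
  proof -
    have "x \<in> X \<Longrightarrow> x = 0 \<or> x = 1 \<or> x = 2" for x using that by auto
    then show ?thesis unfolding s3_def by auto
  qed
  have "card (s3 (0 \<in> A) (1 \<in> A) (2 \<in> A)) = card (s3 (0 \<in> B) (1 \<in> B) (2 \<in> B))"
    using assms(3) dec[OF assms(1)] dec[OF assms(2)] by simp
  from s3_rot[OF this] show ?thesis
    using dec[OF assms(1)] dec[OF assms(2)] by metis
qed


context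
  fixes p :: "nat \<Rightarrow> nat" and k :: nat
  assumes p3: "\<And>i. 1 \<le> i \<Longrightarrow> i \<le> k \<Longrightarrow> p i \<ge> 3"
    and cop: "\<And>i j. 1 \<le> i \<Longrightarrow> i \<le> k \<Longrightarrow> 1 \<le> j \<Longrightarrow> j \<le> k \<Longrightarrow> i \<noteq> j \<Longrightarrow> coprime (p i) (p j)"
begin

lemma crt: "\<exists>m. \<forall>i\<in>{1..k}. m mod p i = u i mod p i"
proof -
  have "\<exists>x. \<forall>i \<in> {1..k}. [x = u i] (mod p i)"
    by (rule chinese_remainder_nat) (use cop in auto)
  thus ?thesis by (auto simp: cong_def)
qed

lemma run_a: "valid p k S \<Longrightarrow> nfa_run p k (qset k S) [SymA] = qset k (\<lambda>i. (\<lambda>j. Suc j mod p i) ` S i)"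
  unfolding valid_def qset_def
  apply (auto split: if_splits)
  subgoal for i j apply (rule exI[of _ "Qst i j"]) using p3[of i] by auto
  done

lemma valid_rot: "valid p k S \<Longrightarrow> valid p k (\<lambda>i. (\<lambda>j. (j + m) mod p i) ` S i)"
  unfolding valid_def using p3 by fastforce

lemma run_am: "valid p k S \<Longrightarrow> nfa_run p k (qset k S) (replicate m SymA) = qset k (\<lambda>i. (\<lambda>j. (j + m) mod p i) ` S i)"
proof (induction m arbitrary: S)
  case 0
  then show ?case unfolding valid_def by (simp, intro qset_cong) force
next
  case (Suc m)
  have "nfa_run p k (qset k S) (replicate (Suc m) SymA) = nfa_run p k (qset k (\<lambda>i. (\<lambda>j. Suc j mod p i) ` S i)) (replicate m SymA)"
    using Suc.prems run_a by simp
  also have "\<dots> = qset k (\<lambda>i. (\<lambda>j. (j + m) mod p i) ` (\<lambda>j. Suc j mod p i) ` S i)"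
    by (rule Suc.IH) (use valid_rot[OF Suc.prems, of 1] in simp)
  also have "\<dots> = qset k (\<lambda>i. (\<lambda>j. (j + Suc m) mod p i) ` S i)"
    unfolding image_image by (simp add: mod_add_left_eq)
  finally show ?case .
qed

lemma run_b_acc: "valid p k S \<Longrightarrow> Qhat \<in> nfa_run p k (qset k S) [SymB] \<longleftrightarrow> (\<exists>l. 1 \<le> l \<and> l \<le> k \<and> 0 \<in> S l)"
  unfolding valid_def qset_def
  apply (auto split: if_splits)
  subgoal for l apply (rule exI[of _ "Qst l 0"]) by auto
  done

lemma run_ba: "valid p k S \<Longrightarrow> 1 \<le> l \<Longrightarrow> l \<le> k \<Longrightarrow> 0 \<in> S l \<Longrightarrow>
   nfa_run p k (qset k S) [SymB, SymA] = qset k (\<lambda>i. {0} \<union> Suc ` (S i \<inter> {1..p i - 2}))"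
  unfolding valid_def qset_def
  apply (auto split: if_splits)
  subgoal for i apply (rule exI[of _ "Qst l 0"]) by auto
  subgoal for i j apply (rule exI[of _ "Qst i j"]) using p3[of i] by auto
  done


abbreviation R :: "(nat \<Rightarrow> nat set) \<Rightarrow> bool" where
  "R S \<equiv> rch p k (qset k S)"

lemma R_cong: "R S \<Longrightarrow> (\<And>i. 1 \<le> i \<Longrightarrow> i \<le> k \<Longrightarrow> S i = T i) \<Longrightarrow> R T"
  using qset_cong by metis

lemma R_start: "R (\<lambda>i. {0})"
proof -
  have "nfa_run p k {Qhat} [SymA] = qset k (\<lambda>i. {0})"
    unfolding qset_def by auto
  then show ?thesis unfolding rch_def by blast
qed

lemma R_rot: assumes "R S" "valid p k S"
  shows "R (\<lambda>i. (\<lambda>j. (j + c i) mod p i) ` S i)"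
proof -
  obtain m where m: "\<forall>i\<in>{1..k}. m mod p i = c i mod p i" using crt[of c] by blast
  have "R (\<lambda>i. (\<lambda>j. (j + m) mod p i) ` S i)"
    using rch_step[OF assms(1), of "replicate m SymA"] run_am[OF assms(2)] by simp
  then show ?thesis
  proof (rule R_cong)
    fix i assume "1 \<le> i" "i \<le> k"
    then have "m mod p i = c i mod p i" using m by auto
    then have "(j + m) mod p i = (j + c i) mod p i" for j
      by (metis mod_add_right_eq)
    then show "(\<lambda>j. (j + m) mod p i) ` S i = (\<lambda>j. (j + c i) mod p i) ` S i" by simp
  qed
qed

lemma R_core: assumes "R S" "valid p k S" "\<And>i. 1 \<le> i \<Longrightarrow> i \<le> k \<Longrightarrow> y i < p i"
    "1 \<le> l" "l \<le> k" "y l \<in> S l"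
  shows "R (\<lambda>i. (S i - {y i}) \<union> {(y i + p i - 1) mod p i})"
proof -
  obtain m1 where m1: "\<forall>i\<in>{1..k}. m1 mod p i = (p i - y i) mod p i" using crt[of "\<lambda>i. p i - y i"] by blast
  obtain m2 where m2: "\<forall>i\<in>{1..k}. m2 mod p i = (y i + p i - 1) mod p i" using crt[of "\<lambda>i. y i + p i - 1"] by blast
  define S1 where "S1 = (\<lambda>i. (\<lambda>j. (j + m1) mod p i) ` S i)"
  have v1: "valid p k S1" unfolding S1_def by (rule valid_rot[OF assms(2)])
  have R1: "R S1" unfolding S1_def
    using rch_step[OF assms(1), of "replicate m1 SymA"] run_am[OF assms(2)] by simp
  have "(y l + m1) mod p l = 0"
  proof -
    have "(y l + m1) mod p l = (y l + m1 mod p l) mod p l" by (simp add: mod_add_right_eq)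
    also have "\<dots> = (y l + (p l - y l) mod p l) mod p l" using m1 assms(4,5) by simp
    also have "\<dots> = (y l + (p l - y l)) mod p l" by (simp add: mod_add_right_eq)
    also have "\<dots> = 0" using assms(3)[OF assms(4,5)] by simp
    finally show ?thesis .
  qed
  then have z: "0 \<in> S1 l" unfolding S1_def using assms(6) by force
  define S2 where "S2 = (\<lambda>i. {0} \<union> Suc ` (S1 i \<inter> {1..p i - 2}))"
  have R2: "R S2" unfolding S2_def
    using rch_step[OF R1, of "[SymB, SymA]"] run_ba[OF v1 assms(4,5) z] by simp
  have v2: "valid p k S2" unfolding S2_def valid_def using p3 by fastforce
  define S3 where "S3 = (\<lambda>i. (\<lambda>j. (j + m2) mod p i) ` S2 i)"
  have R3: "R S3" unfolding S3_def
    using rch_step[OF R2, of "replicate m2 SymA"] run_am[OF v2] by simp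
  then show ?thesis
  proof (rule R_cong)
    fix i assume i: "1 \<le> i" "i \<le> k"
    show "S3 i = (S i - {y i}) \<union> {(y i + p i - 1) mod p i}"
      unfolding S3_def S2_def S1_def
      by (rule core_arith) (use p3[OF i] assms(2,3) m1 m2 i in \<open>auto simp: valid_def\<close>)
  qed
qed


lemma R_rot1: assumes "R S" "valid p k S" "1 \<le> i" "i \<le> k"
  shows "R (S(i := (\<lambda>j. (j + c) mod p i) ` S i))"
proof -
  have "R (\<lambda>l. (\<lambda>j. (j + (if l = i then c else 0)) mod p l) ` S l)"
    by (rule R_rot[OF assms(1,2)])
  then show ?thesis
  proof (rule R_cong)
    fix l assume l: "1 \<le> l" "l \<le> k"
    show "(\<lambda>j. (j + (if l = i then c else 0)) mod p l) ` S l = (S(i := (\<lambda>j. (j + c) mod p i) ` S i)) l"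
    proof (cases "l = i")
      case False
      have "S l \<subseteq> {..<p l}" using assms(2) l unfolding valid_def by auto
      then have "(\<lambda>j. j mod p l) ` S l = S l" by (force simp: image_iff)
      then show ?thesis using False by simp
    qed simp
  qed
qed



definition G :: "(nat \<Rightarrow> nat set) \<Rightarrow> bool" where
  "G S \<longleftrightarrow> (\<forall>i. 1 \<le> i \<longrightarrow> i \<le> k \<longrightarrow> gd (S i) (p i))"

lemma G_intro: "(\<And>i. 1 \<le> i \<Longrightarrow> i \<le> k \<Longrightarrow> gd (S i) (p i)) \<Longrightarrow> G S"
  unfolding G_def by auto

lemma G_valid: "G S \<Longrightarrow> valid p k S"
  unfolding G_def valid_def gd_def by auto

lemma gd_card: "gd A n \<Longrightarrow> finite A \<and> card A \<ge> 1 \<and> card A < n"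
proof -
  assume a: "gd A n"
  then have f: "finite A" unfolding gd_def using finite_subset by blast
  moreover have "card A \<ge> 1" using a f unfolding gd_def by (simp add: Suc_leI card_gt_0_iff)
  moreover have "A \<subset> {..<n}" using a unfolding gd_def by auto
  then have "card A < card {..<n}" by (rule psubset_card_mono[rotated]) simp
  ultimately show ?thesis by simp
qed

lemma build_comp:
  assumes p1: "p 1 = 3" and i: "2 \<le> i" "i \<le> k"
  shows "gd B (p i) \<Longrightarrow> R S \<Longrightarrow> G S \<Longrightarrow> card (S i) = 1 \<Longrightarrow>
     \<exists>S'. R S' \<and> G S' \<and> card (S' 1) = card (S 1) \<and> S' i = B \<and>
          (\<forall>j. 1 \<le> j \<longrightarrow> j \<le> k \<longrightarrow> j \<noteq> 1 \<longrightarrow> j \<noteq> i \<longrightarrow> S' j = S j)"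
proof (induction "card B" arbitrary: B rule: less_induct)
  case less
  have i1: "1 \<le> i" "i \<noteq> 1" using i by auto
  have pi: "p i \<ge> 3" using p3 i1 i by auto
  note Bc = gd_card[OF less.prems(1)]
  show ?case
  proof (cases "card B = 1")
    case True
    obtain b where b: "B = {b}" using True card_1_singletonE by blast
    obtain s where s: "S i = {s}" using less.prems(4) card_1_singletonE by blast
    have bp: "b < p i" using b less.prems(1) unfolding gd_def by auto
    have "gd (S i) (p i)" using less.prems(3) i1 i unfolding G_def by auto
    then have sp: "s < p i" using s unfolding gd_def by auto
    define S' where "S' = S(i := (\<lambda>j. (j + (b + p i - s)) mod p i) ` S i)"
    have R': "R S'" unfolding S'_def by (rule R_rot1[OF less.prems(2) G_valid[OF less.prems(3)] i1(1) i(2)])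
    have "s + (b + p i - s) = b + p i" using sp by simp
    then have "(s + (b + p i - s)) mod p i = b" using bp by simp
    then have S'i: "S' i = B" unfolding S'_def using s b by simp
    have "G S'" using less.prems(3) S'i less.prems(1) unfolding G_def S'_def by auto
    then show ?thesis using R' S'i i1 unfolding S'_def by auto
  next
    case False
    then have c2: "card B \<ge> 2" using Bc by simp
    obtain z where z: "z \<in> B" "Suc z mod p i \<notin> B" using ex_edge[OF less.prems(1)] by blast
    have zp: "z < p i" using z less.prems(1) unfolding gd_def by auto
    define B' where "B' = B - {z}"
    have cB': "card B' < card B" unfolding B'_def using z Bc by (simp add: card_Diff1_less)
    have "card B' \<ge> 1" unfolding B'_def using z Bc c2 by simp
    then have "B' \<noteq> {}" by auto
    then have gB': "gd B' (p i)" using less.prems(1) unfolding gd_def B'_def by auto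
    obtain S' where S': "R S'" "G S'" "card (S' 1) = card (S 1)" "S' i = B'"
      "\<forall>j. 1 \<le> j \<longrightarrow> j \<le> k \<longrightarrow> j \<noteq> 1 \<longrightarrow> j \<noteq> i \<longrightarrow> S' j = S j"
      using less.hyps[OF cB' gB' less.prems(2-4)] by blast
    have k1: "1 \<le> k" using i by simp
    have g1: "gd (S' 1) 3" using S'(2) k1 p1 unfolding G_def by force
    obtain y1 where y1: "y1 < 3" "y1 \<in> S' 1" "(y1 + 3 - 1) mod 3 \<notin> S' 1"
      using helper_choice[OF g1] by blast
    have "\<forall>j. \<exists>y. 1 \<le> j \<and> j \<le> k \<longrightarrow> y < p j \<and> y \<notin> S' j \<and> (y + p j - 1) mod p j \<in> S' j"
      using id_choice S'(2) unfolding G_def by blast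
    then obtain yid where yid: "\<And>j. 1 \<le> j \<Longrightarrow> j \<le> k \<Longrightarrow> yid j < p j \<and> yid j \<notin> S' j \<and> (yid j + p j - 1) mod p j \<in> S' j"
      by metis
    define y where "y = (\<lambda>j. if j = i then Suc z mod p i else if j = 1 then y1 else yid j)"
    have yl: "y j < p j" if "1 \<le> j" "j \<le> k" for j
      using yid[OF that] y1 p1 pi unfolding y_def by auto
    have R'': "R (\<lambda>j. (S' j - {y j}) \<union> {(y j + p j - 1) mod p j})"
      by (rule R_core[OF S'(1) G_valid[OF S'(2)] yl _ _ ]) (use k1 y1 i1 in \<open>auto simp: y_def\<close>)
    define S'' where "S'' = (\<lambda>j. (S' j - {y j}) \<union> {(y j + p j - 1) mod p j})"
    have S''i: "S'' i = B"
      unfolding S''_def y_def using S'(4) sucmod_back[OF zp] z unfolding B'_def by auto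
    have S''1: "S'' 1 = (S' 1 - {y1}) \<union> {(y1 + 3 - 1) mod 3}"
      unfolding S''_def y_def using i1 p1 by simp
    have fin1: "finite (S' 1)" using gd_card[OF g1] by simp
    have cS''1: "card (S'' 1) = card (S' 1)"
    proof -
      have "card (S' 1) > 0" using fin1 y1(2) card_gt_0_iff by blast
      then show ?thesis unfolding S''1 using y1 fin1 by simp
    qed
    have S''o: "S'' j = S' j" if "1 \<le> j" "j \<le> k" "j \<noteq> 1" "j \<noteq> i" for j
      using yid[OF that(1,2)] that unfolding S''_def y_def by auto
    have gS''1: "gd (S'' 1) 3"
    proof -
      have sub: "S'' 1 \<subseteq> {..<3}" unfolding S''1 using g1 unfolding gd_def by auto
      have "card (S'' 1) \<ge> 1" "card (S'' 1) < 3" using cS''1 gd_card[OF g1] by auto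
      then show ?thesis using sub unfolding gd_def by auto
    qed
    have "G S''" unfolding G_def
    proof (intro allI impI)
      fix j assume j: "1 \<le> j" "j \<le> k"
      show "gd (S'' j) (p j)"
        using S''o[OF j] S''i gS''1 p1 less.prems(1) S'(2) j unfolding G_def
        by (cases "j = 1"; cases "j = i") auto
    qed
    then show ?thesis using R'' S''i cS''1 S'(3,5) S''o unfolding S''_def[symmetric]
      by (intro exI[of _ S'']) auto
  qed
qed


lemma gd_single: "n \<ge> 3 \<Longrightarrow> x < n \<Longrightarrow> gd {x} n"
proof -
  assume "n \<ge> 3" "x < n"
  moreover have "{x} \<noteq> {..<n}"
  proof
    assume "{x} = {..<n}"
    then have "card {x} = card {..<n}" by simp
    then show False using \<open>n \<ge> 3\<close> by simp
  qed
  ultimately show ?thesis unfolding gd_def by auto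
qed

lemma reach_base:
  assumes p1: "p 1 = 3" and k2: "k \<ge> 2" and gT: "gd (T 1) 3"
  shows "\<exists>S. R S \<and> G S \<and> card (S 1) = card (T 1) \<and> (\<forall>j. 1 < j \<longrightarrow> j \<le> k \<longrightarrow> card (S j) = 1)"
proof -
  have c: "card (T 1) = 1 \<or> card (T 1) = 2" using gd_card[OF gT] by auto
  have G0: "G (\<lambda>i. {0})" unfolding G_def
  proof (intro allI impI)
    fix i assume "1 \<le> i" "i \<le> k"
    then show "gd {0} (p i)" using gd_single[of "p i" 0] p3[of i] by simp
  qed
  show ?thesis
  proof (cases "card (T 1) = 1")
    case True
    then show ?thesis using R_start G0 by (intro exI[of _ "\<lambda>i. {0}"]) auto
  next
    case False
    then have c2: "card (T 1) = 2" using c by simp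
    define y :: "nat \<Rightarrow> nat" where "y = (\<lambda>i. if i = 1 then 2 else if i = 2 then 0 else 1)"
    have yl: "y i < p i" if "1 \<le> i" "i \<le> k" for i using p3[OF that] p1 unfolding y_def by auto
    have R1: "R (\<lambda>i. ({0} - {y i}) \<union> {(y i + p i - 1) mod p i})"
    proof (rule R_core[OF R_start _ yl, of 2])
      show "valid p k (\<lambda>i. {0})" unfolding valid_def
      proof (intro allI impI)
        fix i assume "1 \<le> i" "i \<le> k"
        then show "{0} \<subseteq> {..<p i}" using p3[of i] by simp
      qed
    qed (use k2 in \<open>auto simp: y_def\<close>)
    define S where "S = (\<lambda>i. ({0::nat} - {y i}) \<union> {(y i + p i - 1) mod p i})"
    have S1: "S 1 = {0, 1}" unfolding S_def y_def p1 by auto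
    have S2: "S 2 = {p 2 - 1}" unfolding S_def y_def using p3[of 2] k2 by simp
    have So: "S j = {0}" if "j \<noteq> 1" "j \<noteq> 2" "1 \<le> j" "j \<le> k" for j
      unfolding S_def y_def using that p3[OF that(3,4)] by auto
    have gS1: "gd (S 1) 3"
    proof -
      have "(2::nat) \<in> {..<3}" "(2::nat) \<notin> {0, 1}" by auto
      then have "{0, 1::nat} \<noteq> {..<3}" by blast
      then show ?thesis unfolding S1 gd_def by auto
    qed
    have "G S" unfolding G_def
    proof (intro allI impI)
      fix j assume j: "1 \<le> j" "j \<le> k"
      show "gd (S j) (p j)"
      proof (cases "j = 1")
        case True then show ?thesis using gS1 p1 by simp
      next
        case False
        show ?thesis
        proof (cases "j = 2")
          case True then show ?thesis using S2 gd_single[of "p j" "p j - 1"] p3[OF j] by simp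
        next
          case False
          then show ?thesis using So[OF \<open>j \<noteq> 1\<close> False j] gd_single[of "p j" 0] p3[OF j] by simp
        qed
      qed
    qed
    moreover have "\<forall>j. 1 < j \<longrightarrow> j \<le> k \<longrightarrow> card (S j) = 1"
    proof (intro allI impI)
      fix j assume j: "1 < j" "j \<le> k"
      show "card (S j) = 1"
      proof (cases "j = 2")
        case True then show ?thesis using S2 by simp
      next
        case False then show ?thesis using So[of j] j by simp
      qed
    qed
    ultimately show ?thesis using R1 S1 c2 unfolding S_def[symmetric] by (intro exI[of _ S]) auto
  qed
qed

lemma reach_all:
  assumes p1: "p 1 = 3" and k2: "k \<ge> 2" and gT: "G T"
  shows "R T"
proof -
  have gT1: "gd (T 1) 3" using gT p1 k2 unfolding G_def by force
  have inv: "\<exists>S. R S \<and> G S \<and> card (S 1) = card (T 1) \<and> (\<forall>j. 2 \<le> j \<longrightarrow> j \<le> n \<longrightarrow> S j = T j)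
      \<and> (\<forall>j. n < j \<longrightarrow> 1 < j \<longrightarrow> j \<le> k \<longrightarrow> card (S j) = 1)" if "n \<le> k" for n
    using that
  proof (induction n)
    case 0
    then show ?case using reach_base[of T, OF p1 k2 gT1] by auto
  next
    case (Suc n)
    then obtain S where S: "R S" "G S" "card (S 1) = card (T 1)" "\<forall>j. 2 \<le> j \<longrightarrow> j \<le> n \<longrightarrow> S j = T j"
      "\<forall>j. n < j \<longrightarrow> 1 < j \<longrightarrow> j \<le> k \<longrightarrow> card (S j) = 1" by auto
    show ?case
    proof (cases "n = 0")
      case True
      then show ?thesis using S by (intro exI[of _ S]) auto
    next
      case False
      have i: "2 \<le> Suc n" "Suc n \<le> k" using False Suc.prems by auto
      have gB: "gd (T (Suc n)) (p (Suc n))" using gT i unfolding G_def by auto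
      obtain S' where S': "R S'" "G S'" "card (S' 1) = card (S 1)" "S' (Suc n) = T (Suc n)"
        "\<forall>j. 1 \<le> j \<longrightarrow> j \<le> k \<longrightarrow> j \<noteq> 1 \<longrightarrow> j \<noteq> Suc n \<longrightarrow> S' j = S j"
        using build_comp[OF p1 i gB S(1,2)] S(5) i by auto
      show ?thesis
      proof (intro exI[of _ S'] conjI allI impI)
        fix j assume "2 \<le> j" "j \<le> Suc n"
        then show "S' j = T j" using S'(4,5) S(4) i by (cases "j = Suc n") auto
      next
        fix j assume "Suc n < j" "1 < j" "j \<le> k"
        then show "card (S' j) = 1" using S'(5) S(5) by auto
      qed (use S' S in auto)
    qed
  qed
  obtain S where S: "R S" "G S" "card (S 1) = card (T 1)" "\<forall>j. 2 \<le> j \<longrightarrow> j \<le> k \<longrightarrow> S j = T j"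
    using inv[of k] by auto
  have gS1: "gd (S 1) 3" using S(2) p1 k2 unfolding G_def by force
  obtain c where c: "T 1 = (\<lambda>j. (j + c) mod 3) ` S 1"
    using z3_rot[of "S 1" "T 1"] gS1 gT1 S(3) unfolding gd_def by auto
  have "R (S(1 := (\<lambda>j. (j + c) mod p 1) ` S 1))"
    by (rule R_rot1[OF S(1) G_valid[OF S(2)]]) (use k2 in auto)
  then show ?thesis
  proof (rule R_cong)
    fix j assume "1 \<le> j" "j \<le> k"
    then show "(S(1 := (\<lambda>j. (j + c) mod p 1) ` S 1)) j = T j"
      using S(4) c p1 by (cases "j = 1") auto
  qed
qed


lemma eq_of_rot0: assumes "(x::nat) < n" "a < n" "m mod n = (n - a) mod n" "(x + m) mod n = 0"
  shows "x = a"
proof -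
  have "(x + m) mod n = (x + m mod n) mod n" by (simp add: mod_add_right_eq)
  also have "\<dots> = (x + (n - a)) mod n" using assms(3) by (simp add: mod_add_right_eq)
  also have "\<dots> = (if a \<le> x then x - a else x + n - a)" by (rule arith_rot[OF assms(1,2)])
  finally show ?thesis using assms(1,2,4) by (auto split: if_splits)
qed

lemma dist1:
  assumes gT: "G T" and gT': "G T'" and i: "1 \<le> i" "i \<le> k" and j: "j \<in> T i" "j \<notin> T' i"
  shows "\<exists>w. Qhat \<in> nfa_run p k (qset k T) w \<and> Qhat \<notin> nfa_run p k (qset k T') w"
proof -
  have "\<forall>l. \<exists>g. 1 \<le> l \<and> l \<le> k \<longrightarrow> g < p l \<and> g \<notin> T' l"
    using gT' unfolding G_def gd_def by blast
  then obtain g where g: "\<And>l. 1 \<le> l \<Longrightarrow> l \<le> k \<Longrightarrow> g l < p l \<and> g l \<notin> T' l" by metis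
  define a where "a = (\<lambda>l. if l = i then j else g l)"
  obtain m where m: "\<forall>l\<in>{1..k}. m mod p l = (p l - a l) mod p l" using crt[of "\<lambda>l. p l - a l"] by blast
  have jp: "j < p i" using gT i j unfolding G_def gd_def by blast
  have vT: "valid p k T" and vT': "valid p k T'" using gT gT' G_valid by auto
  define w where "w = replicate m SymA @ [SymB]"
  have e1: "nfa_run p k (qset k T) w = nfa_run p k (qset k (\<lambda>i. (\<lambda>j. (j + m) mod p i) ` T i)) [SymB]"
    unfolding w_def run_append using run_am[OF vT] by simp
  have e2: "nfa_run p k (qset k T') w = nfa_run p k (qset k (\<lambda>i. (\<lambda>j. (j + m) mod p i) ` T' i)) [SymB]"
    unfolding w_def run_append using run_am[OF vT'] by simp
  have "(j + m) mod p i = 0"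
  proof -
    have "(j + m) mod p i = (j + m mod p i) mod p i" by (simp add: mod_add_right_eq)
    also have "\<dots> = (j + (p i - j) mod p i) mod p i" using m i unfolding a_def by simp
    also have "\<dots> = (j + (p i - j)) mod p i" by (simp add: mod_add_right_eq)
    also have "\<dots> = 0" using jp by simp
    finally show ?thesis .
  qed
  then have A: "Qhat \<in> nfa_run p k (qset k T) w"
    unfolding e1 run_b_acc[OF valid_rot[OF vT]] using i j by force
  have B: "Qhat \<notin> nfa_run p k (qset k T') w"
  proof
    assume "Qhat \<in> nfa_run p k (qset k T') w"
    then obtain l x where l: "1 \<le> l" "l \<le> k" "x \<in> T' l" "(x + m) mod p l = 0"
      unfolding e2 run_b_acc[OF valid_rot[OF vT']] by auto
    have xp: "x < p l" using l vT' unfolding valid_def by auto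
    have al: "a l < p l" using g[OF l(1,2)] jp unfolding a_def by auto
    have "x = a l" by (rule eq_of_rot0[OF xp al _ l(4)]) (use m l in auto)
    then show False using l(3) g[OF l(1,2)] j unfolding a_def by (auto split: if_splits)
  qed
  show ?thesis using A B by blast
qed

end

lemma dfa_run_Q: "dfa_recognizes Q q0 \<delta> F L \<Longrightarrow> q \<in> Q \<Longrightarrow> dfa_run \<delta> q w \<in> Q"
  unfolding dfa_run_def dfa_recognizes_def by (induction w arbitrary: q) auto

lemma card_gd: "n \<ge> 1 \<Longrightarrow> card {A. gd A n} = 2 ^ n - 2"
proof -
  assume n: "n \<ge> 1"
  have eq: "{A. gd A n} = Pow {..<n} - {{}, {..<n}}" unfolding gd_def by auto
  have "(0::nat) \<in> {..<n}" using n by simp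
  then have ne: "{} \<noteq> {..<n::nat}" by blast
  have "card (Pow {..<n} - {{}, {..<n}}) = card (Pow {..<n}) - card {{}, {..<n::nat}}"
    by (rule card_Diff_subset) auto
  also have "\<dots> = 2 ^ n - 2" using ne by (simp add: card_Pow)
  finally show ?thesis unfolding eq .
qed

theorem lemma6:
  fixes p :: "nat \<Rightarrow> nat" and k :: nat
    and Q :: "'q set" and q0 :: 'q and \<delta> :: "'q \<Rightarrow> sym \<Rightarrow> 'q" and F :: "'q set"
  assumes "k \<ge> 2"
    and "\<And>i. 1 \<le> i \<Longrightarrow> i \<le> k \<Longrightarrow> p i \<ge> 3"
    and "\<And>i j. 1 \<le> i \<Longrightarrow> i \<le> k \<Longrightarrow> 1 \<le> j \<Longrightarrow> j \<le> k \<Longrightarrow> i \<noteq> j \<Longrightarrow> coprime (p i) (p j)"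
    and "p 1 = 3"
    and "dfa_recognizes Q q0 \<delta> F (nfa_lang p k)"
  shows "card Q \<ge> (\<Prod>i=1..k. 2 ^ p i - 2)"
proof -
  note p3 = assms(2) and cop = assms(3) and dfa = assms(5)
  define Fam where "Fam = PiE {1..k} (\<lambda>i. {A. gd A (p i)})"
  have GF: "G p k T" if "T \<in> Fam" for T
    by (rule G_intro[OF p3 cop]) (use that in \<open>auto simp: PiE_iff Fam_def\<close>)
  have reach: "\<exists>w. nfa_run p k {Qhat} w = qset k T" if "T \<in> Fam" for T
    using reach_all[OF p3 cop assms(4,1) GF[OF that]] unfolding rch_def by blast
  define wd where "wd T = (SOME w. nfa_run p k {Qhat} w = qset k T)" for T
  have wd: "nfa_run p k {Qhat} (wd T) = qset k T" if "T \<in> Fam" for T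
    unfolding wd_def using someI_ex[OF reach[OF that]] .
  define f where "f T = dfa_run \<delta> q0 (wd T)" for T
  have q0: "q0 \<in> Q" and finQ: "finite Q" using dfa unfolding dfa_recognizes_def by auto
  have fQ: "f ` Fam \<subseteq> Q" unfolding f_def using dfa_run_Q[OF dfa q0] by auto
  have key: "Qhat \<in> nfa_run p k (qset k T) w \<longleftrightarrow> dfa_run \<delta> (f T) w \<in> F" if "T \<in> Fam" for T w
  proof -
    have "Qhat \<in> nfa_run p k (qset k T) w \<longleftrightarrow> wd T @ w \<in> nfa_lang p k"
      unfolding nfa_lang_def using run_append[of p k "{Qhat}" "wd T" w] wd[OF that] by simp
    also have "\<dots> \<longleftrightarrow> dfa_run \<delta> q0 (wd T @ w) \<in> F" using dfa unfolding dfa_recognizes_def by blast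
    also have "dfa_run \<delta> q0 (wd T @ w) = dfa_run \<delta> (f T) w" unfolding f_def dfa_run_def by simp
    finally show ?thesis .
  qed
  have inj: "inj_on f Fam"
  proof (rule inj_onI, rule ccontr)
    fix T T' assume T: "T \<in> Fam" and T': "T' \<in> Fam" and feq: "f T = f T'" and ne: "T \<noteq> T'"
    obtain i where i: "i \<in> {1..k}" "T i \<noteq> T' i"
      using ne PiE_ext[OF T[unfolded Fam_def] T'[unfolded Fam_def]] by blast
    then have i': "1 \<le> i" "i \<le> k" by auto
    have "\<exists>w. (Qhat \<in> nfa_run p k (qset k T) w) \<noteq> (Qhat \<in> nfa_run p k (qset k T') w)"
    proof (cases "T i \<subseteq> T' i")
      case True
      then obtain j where "j \<in> T' i" "j \<notin> T i" using i(2) by blast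
      then show ?thesis using dist1[OF p3 cop GF[OF T'] GF[OF T] i'] by blast
    next
      case False
      then obtain j where "j \<in> T i" "j \<notin> T' i" by blast
      then show ?thesis using dist1[OF p3 cop GF[OF T] GF[OF T'] i'] by blast
    qed
    then show False using key[OF T] key[OF T'] feq by auto
  qed
  have "card Fam = (\<Prod>i=1..k. 2 ^ p i - 2)"
    unfolding Fam_def
  proof (subst card_PiE)
    show "(\<Prod>i\<in>{1..k}. card {A. gd A (p i)}) = (\<Prod>i = 1..k. 2 ^ p i - 2)"
    proof (rule prod.cong)
      fix i assume "i \<in> {1..k}"
      then have "p i \<ge> 1" using p3[of i] by auto
      then show "card {A. gd A (p i)} = 2 ^ p i - 2" by (rule card_gd)
    qed simp
  qed simp
  moreover have "card Fam \<le> card Q" by (rule card_inj_on_le[OF inj fQ finQ])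
  ultimately show ?thesis by simp
qed

end
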